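(* Let $G$ be a compact topological group admitting a continuous $2$-transitive action on a topological space $X$ satisfying the $T_1$ separation axiom (all singletons closed). Then $X$ is finite.
   Context: Continuity of the action means (at least) that each orbit map $G\to X$, $g\mapsto g\cdot x$, is continuous. *)

theory Defs
  imports "HOL-Analysis.Analysis" "HOL-Algebra.Group_Action"
begin

definition topological_group :: "('g, 'b) monoid_scheme \<Rightarrow> 'g topology \<Rightarrow> bool" where
  "topological_group G T \<longleftrightarrow>
     group G \<and> topspace T = carrier G \<and>
     continuous_map (prod_topology T T) T (\<lambda>(x, y). x \<otimes>\<^bsub>G\<^esub> y) \<and>
     continuous_map T T (\<lambda>x. inv\<^bsub>G\<^esub> x)"

definition continuous_action ::
  "('g, 'b) monoid_scheme \<Rightarrow> 'g topology \<Rightarrow> 'x topology \<Rightarrow> ('g \<Rightarrow> 'x \<Rightarrow> 'x) \<Rightarrow> bool" where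
  "continuous_action G T X \<phi> \<longleftrightarrow>
     group_action G (topspace X) \<phi> \<and>
     (\<forall>x \<in> topspace X. continuous_map T X (\<lambda>g. \<phi> g x))"

definition two_transitive :: "('g, 'b) monoid_scheme \<Rightarrow> 'x set \<Rightarrow> ('g \<Rightarrow> 'x \<Rightarrow> 'x) \<Rightarrow> bool" where
  "two_transitive G E \<phi> \<longleftrightarrow>
     (\<forall>x1 \<in> E. \<forall>x2 \<in> E. \<forall>y1 \<in> E. \<forall>y2 \<in> E. x1 \<noteq> x2 \<longrightarrow> y1 \<noteq> y2 \<longrightarrow>
        (\<exists>g \<in> carrier G. \<phi> g x1 = y1 \<and> \<phi> g x2 = y2))"

end

theory Submission
  imports Defs
begin

lemma cont_invmul:
  assumes "topological_group G T"
  shows "continuous_map (prod_topology T T) T (\<lambda>pv. inv\<^bsub>G\<^esub> (fst pv) \<otimes>\<^bsub>G\<^esub> snd pv)"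
proof -
  have m: "continuous_map (prod_topology T T) T (\<lambda>(x, y). x \<otimes>\<^bsub>G\<^esub> y)"
   and i: "continuous_map T T (\<lambda>x. inv\<^bsub>G\<^esub> x)"
    using assms unfolding topological_group_def by auto
  have "continuous_map (prod_topology T T) (prod_topology T T) (\<lambda>(p, v). (inv\<^bsub>G\<^esub> p, v))"
    unfolding continuous_map_pairwise
  proof
    show "continuous_map (prod_topology T T) T (fst \<circ> (\<lambda>(p, v). (inv\<^bsub>G\<^esub> p, v)))"
    proof -
      have e: "fst \<circ> (\<lambda>(p, v). (inv\<^bsub>G\<^esub> p, v)) = (\<lambda>x. inv\<^bsub>G\<^esub> x) \<circ> fst" by auto
      show ?thesis unfolding e by (rule continuous_map_compose[OF continuous_map_fst i])
    qed
    show "continuous_map (prod_topology T T) T (snd \<circ> (\<lambda>(p, v). (inv\<^bsub>G\<^esub> p, v)))"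
    proof -
      have e: "snd \<circ> (\<lambda>(p, v). (inv\<^bsub>G\<^esub> p, v)) = snd" by auto
      show ?thesis unfolding e by (rule continuous_map_snd)
    qed
  qed
  from continuous_map_compose[OF this m]
  show ?thesis by (simp add: o_def case_prod_beta)
qed

theorem mainTheorem6:
  fixes G :: "('g, 'b) monoid_scheme" and T :: "'g topology"
    and X :: "'x topology" and \<phi> :: "'g \<Rightarrow> 'x \<Rightarrow> 'x"
  assumes "topological_group G T"
    and "compact_space T"
    and "t1_space X"
    and "continuous_action G T X \<phi>"
    and "two_transitive G (topspace X) \<phi>"
  shows "finite (topspace X)"
proof (rule ccontr)
  assume inf: "infinite (topspace X)"
  define E where "E = topspace X"
  have grp: "group G" and TG: "topspace T = carrier G"
    using assms(1) unfolding topological_group_def by auto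
  interpret group G by (rule grp)
  interpret ga: group_action G E \<phi>
    using assms(4) unfolding continuous_action_def E_def by auto
  have orb: "\<And>x. x \<in> E \<Longrightarrow> continuous_map T X (\<lambda>g. \<phi> g x)"
    using assms(4) unfolding continuous_action_def E_def by auto
  have tt: "\<And>x1 x2 y1 y2. x1 \<in> E \<Longrightarrow> x2 \<in> E \<Longrightarrow> y1 \<in> E \<Longrightarrow> y2 \<in> E \<Longrightarrow> x1 \<noteq> x2 \<Longrightarrow> y1 \<noteq> y2
      \<Longrightarrow> \<exists>g \<in> carrier G. \<phi> g x1 = y1 \<and> \<phi> g x2 = y2"
    using assms(5) unfolding two_transitive_def E_def by blast
  have closed1: "\<And>y. y \<in> E \<Longrightarrow> closedin X {y}"
    using assms(3) unfolding t1_space_closedin_singleton E_def by blast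
  have other: "\<And>y. \<exists>z \<in> E. z \<noteq> y"
  proof -
    fix y
    have "infinite (E - {y})" using inf E_def by simp
    then have "E - {y} \<noteq> {}" by (metis finite.emptyI)
    then show "\<exists>z \<in> E. z \<noteq> y" by blast
  qed
  obtain a where a: "a \<in> E" using other by blast
  define C where "C = (\<lambda>y. {k \<in> carrier G. \<phi> k a = y})"
  have Copen: "openin T (C y)" if y: "y \<in> E" for y
  proof -
    obtain z where z: "z \<in> E" "z \<noteq> y" using other by blast
    define P where "P = {p \<in> carrier G. \<phi> p y = y}"
    have "P = {p \<in> topspace T. (\<lambda>g. \<phi> g y) p \<in> {y}}" unfolding P_def TG by auto
    then have "closedin T P"
      using closedin_continuous_map_preimage[OF orb[OF y] closed1[OF y]] by simp
    then have Pc: "compactin T P"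
      using closed_compactin[of T "topspace T" P] assms(2) closedin_subset
      unfolding compact_space_def by blast
    define f where "f = (\<lambda>pv. \<phi> (inv\<^bsub>G\<^esub> (fst pv) \<otimes>\<^bsub>G\<^esub> snd pv) a)"
    have fc: "continuous_map (prod_topology T T) X f"
      unfolding f_def using continuous_map_compose[OF cont_invmul[OF assms(1)] orb[OF a]]
      by (simp add: o_def case_prod_beta)
    define W where "W = {pv \<in> topspace (prod_topology T T). f pv \<in> topspace X - {z}}"
    have Wo: "openin (prod_topology T T) W"
      unfolding W_def
      apply (rule openin_continuous_map_preimage[OF fc])
      using closed1[OF z(1)] by (simp add: closedin_def)
    show ?thesis
      unfolding openin_subopen[of T "C y"]
    proof
      fix x assume x: "x \<in> C y"
      then have xG: "x \<in> carrier G" and xa: "\<phi> x a = y" unfolding C_def by auto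
      have "P \<times> {x} \<subseteq> W"
      proof
        fix pv assume "pv \<in> P \<times> {x}"
        then obtain p where p: "pv = (p, x)" "p \<in> carrier G" "\<phi> p y = y" unfolding P_def by auto
        have "f pv = \<phi> (inv\<^bsub>G\<^esub> p) (\<phi> x a)"
          unfolding f_def p(1) using ga.composition_rule[OF a, of "inv\<^bsub>G\<^esub> p" x] p xG by simp
        also have "\<dots> = y" using xa ga.orbit_sym_aux[OF p(2) y p(3)] by simp
        finally show "pv \<in> W" unfolding W_def using p xG TG y z E_def by auto
      qed
      from tube_lemma_left[OF Wo Pc _ this] xG TG
      obtain U V where UV0: "openin T V" "x \<in> V" "P \<subseteq> U" "U \<times> V \<subseteq> W" by blast
      have UV: "openin T V" "x \<in> V" "P \<times> V \<subseteq> W" using UV0 by auto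
      have "V \<subseteq> C y"
      proof
        fix v assume v: "v \<in> V"
        then have vG: "v \<in> carrier G" using openin_subset[OF UV(1)] TG by auto
        show "v \<in> C y"
        proof (rule ccontr)
          assume "v \<notin> C y"
          then have ne: "\<phi> v a \<noteq> y" using vG unfolding C_def by auto
          have cE: "\<phi> v a \<in> E" using ga.element_image[OF vG a] by simp
          obtain p where p: "p \<in> carrier G" "\<phi> p y = y" "\<phi> p z = \<phi> v a"
            using tt[OF y z(1) y cE not_sym[OF z(2)] not_sym[OF ne]] by blast
          have "p \<in> P" using p unfolding P_def by auto
          then have "(p, v) \<in> W" using UV(3) v by auto
          moreover have "f (p, v) = z"
          proof -
            have "f (p, v) = \<phi> (inv\<^bsub>G\<^esub> p) (\<phi> v a)"
              unfolding f_def using ga.composition_rule[OF a, of "inv\<^bsub>G\<^esub> p" v] p vG by simp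
            also have "\<dots> = z" using ga.orbit_sym_aux[OF p(1) z(1) p(3)] by simp
            finally show ?thesis .
          qed
          ultimately show False unfolding W_def by auto
        qed
      qed
      then show "\<exists>U. openin T U \<and> x \<in> U \<and> U \<subseteq> C y" using UV by blast
    qed
  qed
  have cov: "topspace T \<subseteq> \<Union> (C ` E)"
    unfolding TG C_def using ga.element_image[OF _ a] by auto
  have op: "\<forall>U\<in>C ` E. openin T U" using Copen by blast
  have "\<exists>F. finite F \<and> F \<subseteq> C ` E \<and> topspace T \<subseteq> \<Union> F"
    using assms(2) cov op unfolding compact_space_def compactin_def by blast
  then obtain F where F: "finite F" "F \<subseteq> C ` E" "topspace T \<subseteq> \<Union> F" by blast
  obtain Y where Y: "Y \<subseteq> E" "finite Y" "F = C ` Y"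
    using finite_subset_image[OF F(1) F(2)] by blast
  have "E \<subseteq> Y"
  proof
    fix y assume y: "y \<in> E"
    obtain b where b: "b \<in> E" "b \<noteq> a" using other by blast
    obtain w where w: "w \<in> E" "w \<noteq> y" using other by blast
    obtain k where k: "k \<in> carrier G" "\<phi> k a = y" using tt[OF a b(1) y w(1) not_sym[OF b(2)] not_sym[OF w(2)]] by blast
    then have "k \<in> \<Union> F" using F(3) TG by auto
    then obtain y' where "y' \<in> Y" "k \<in> C y'" using Y(3) by auto
    then show "y \<in> Y" using k unfolding C_def by auto
  qed
  then have "finite E" using Y(2) finite_subset by blast
  then show False using inf E_def by simp
qed

end
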